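(* Let $Q\subset\mathbb{R}^2$ be a compact convex region, let $\phi:Q\to[0,\infty)$ be an integrable density, and let $p_1,\dots,p_n\in Q$ be pairwise distinct sensor positions. Write $\|q,p\|$ for the Euclidean distance. Let $f:[0,\infty)^2\to\mathbb{R}$ be differentiable and satisfy, for all $a,b\ge0$: $\frac{\partial f}{\partial a}(a,b)\ge 0$, $\frac{\partial f}{\partial b}(a,b)\ge 0$, and $f(a,b)=f(b,a)$. Let $C=\{(i,j): i,j\in\{1,\dots,n\},\ i<j\}$ and for $(i,j)\in C$ let $$V_{\mathcal{T}_{ij}}=\{q\in Q \mid \|q,p_i\|\le \|q,p_m\| \text{ and } \|q,p_j\|\le \|q,p_m\| \text{ for all } m\notin\{i,j\}\}.$$ Then $$\int_Q \min_{(i,j)\in C} f(\|q,p_i\|,\|q,p_j\|)\,\phi(q)\,dq=\sum_{(i,j)\in C}\int_{V_{\mathcal{T}_{ij}}} f(\|q,p_i\|,\|q,p_j\|)\,\phi(q)\,dq.$$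
   Context: The left-hand side is the order-2 coverage performance function $\mathcal{H}(p_1,\dots,p_n)$. The sets $V_{\mathcal{T}_{ij}}$ are the cells of the order-2 Voronoi partition of $Q$ generated by $p_1,\dots,p_n$ (empty cells contribute zero). *)

theory Defs
  imports "HOL-Analysis.Analysis"
begin

definition pairs :: "nat \<Rightarrow> (nat \<times> nat) set" where
  "pairs n = {(i, j). i \<in> {1..n} \<and> j \<in> {1..n} \<and> i < j}"

definition order2_cell ::
  "(real^2) set \<Rightarrow> nat \<Rightarrow> (nat \<Rightarrow> real^2) \<Rightarrow> nat \<Rightarrow> nat \<Rightarrow> (real^2) set" where
  "order2_cell Q n p i j = {q \<in> Q. \<forall>m \<in> {1..n} - {i, j}.
       dist q (p i) \<le> dist q (p m) \<and> dist q (p j) \<le> dist q (p m)}"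

end

theory Submission
  imports Defs
begin

lemma bisector_null:
  fixes a b :: "real^2"
  assumes "a \<noteq> b"
  shows "{q. dist q a = dist q b} \<in> null_sets lborel"
proof -
  have eq: "{q. dist q a = dist q b} = {q. (2 *\<^sub>R (b - a)) \<bullet> q = b \<bullet> b - a \<bullet> a}"
  proof -
    have "dist q a = dist q b \<longleftrightarrow> (2 *\<^sub>R (b - a)) \<bullet> q = b \<bullet> b - a \<bullet> a" for q
    proof -
      have "dist q a = dist q b \<longleftrightarrow> (q - a) \<bullet> (q - a) = (q - b) \<bullet> (q - b)"
        by (simp add: dist_norm norm_eq_sqrt_inner)
      also have "\<dots> \<longleftrightarrow> (2 *\<^sub>R (b - a)) \<bullet> q = b \<bullet> b - a \<bullet> a"
        by (simp add: inner_diff_left inner_diff_right inner_commute algebra_simps)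
      finally show ?thesis .
    qed
    thus ?thesis by auto
  qed
  have "negligible {q. dist q a = dist q b}"
    unfolding eq by (rule negligible_hyperplane) (use assms in auto)
  moreover have "closed {q. dist q a = dist q b}"
    by (intro closed_Collect_eq continuous_intros)
  ultimately show ?thesis
    by (auto simp: null_sets_completion_iff negligible_iff_null_sets borel_closed)
qed

lemma mono2:
  fixes f :: "real \<times> real \<Rightarrow> real"
  assumes dif: "f differentiable_on {x. fst x \<ge> 0 \<and> snd x \<ge> 0}"
    and der: "\<And>a b D. a \<ge> 0 \<Longrightarrow> b \<ge> 0 \<Longrightarrow>
           ((\<lambda>t. f (a, t)) has_real_derivative D) (at b within {0..}) \<Longrightarrow> D \<ge> 0"
    and a: "a \<ge> 0" and xy: "0 \<le> x" "x \<le> y"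
  shows "f (a, x) \<le> f (a, y)"
proof -
  let ?S = "{x::real\<times>real. fst x \<ge> 0 \<and> snd x \<ge> 0}"
  have d: "\<exists>D. ((\<lambda>t. f (a, t)) has_real_derivative D) (at t within {0..})" if t: "t \<ge> 0" for t
  proof -
    have "f differentiable at (a,t) within ?S" using dif a t unfolding differentiable_on_def by auto
    hence "f differentiable at ((\<lambda>t. (a,t)) t) within (\<lambda>t. (a,t)) ` {0..}"
      by (rule differentiable_within_subset) (use a in auto)
    moreover have "(\<lambda>t. (a,t)) differentiable at t within {0..}"
      by (rule derivative_intros)+
    ultimately have "f \<circ> (\<lambda>t. (a,t)) differentiable at t within {0..}"
      using differentiable_chain_within by blast
    thus ?thesis unfolding real_differentiable_def o_def .
  qed
  have cont: "continuous_on {x..y} (\<lambda>t. f (a, t))"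
  proof (rule differentiable_imp_continuous_on)
    show "(\<lambda>t. f (a, t)) differentiable_on {x..y}"
      unfolding differentiable_on_def
    proof
      fix t assume "t \<in> {x..y}"
      then obtain D where "((\<lambda>t. f (a, t)) has_real_derivative D) (at t within {0..})" using d xy by force
      hence "((\<lambda>t. f (a, t)) has_real_derivative D) (at t within {x..y})"
        by (rule DERIV_subset) (use xy in auto)
      thus "(\<lambda>t. f (a, t)) differentiable at t within {x..y}" unfolding real_differentiable_def by blast
    qed
  qed
  show ?thesis
  proof (rule DERIV_nonneg_imp_increasing_open[OF xy(2) _ cont])
    fix t assume t: "x < t" "t < y"
    then obtain D where D: "((\<lambda>t. f (a, t)) has_real_derivative D) (at t within {0..})" using d xy by force
    have "at t within {0..} = at t"
      by (rule at_within_interior) (use t xy in auto)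
    thus "\<exists>D. ((\<lambda>t. f (a, t)) has_real_derivative D) (at t) \<and> 0 \<le> D"
      using D der[OF a _ D] t xy by auto
  qed
qed

lemma mono_both:
  fixes f :: "real \<times> real \<Rightarrow> real"
  assumes dif: "f differentiable_on {x. fst x \<ge> 0 \<and> snd x \<ge> 0}"
    and der: "\<And>a b D. a \<ge> 0 \<Longrightarrow> b \<ge> 0 \<Longrightarrow>
           ((\<lambda>t. f (a, t)) has_real_derivative D) (at b within {0..}) \<Longrightarrow> D \<ge> 0"
    and sym: "\<And>a b. a \<ge> 0 \<Longrightarrow> b \<ge> 0 \<Longrightarrow> f (a, b) = f (b, a)"
    and "0 \<le> x" "x \<le> x'" "0 \<le> y" "y \<le> y'"
  shows "f (x, y) \<le> f (x', y')"
proof -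
  have y': "0 \<le> y'" "0 \<le> x'" using assms(4-7) by linarith+
  have "f (x, y) \<le> f (x, y')" by (rule mono2[OF dif der assms(4) assms(6) assms(7)])
  also have "\<dots> = f (y', x)" using sym assms(4) y' by blast
  also have "\<dots> \<le> f (y', x')" by (rule mono2[OF dif der y'(1) assms(4) assms(5)])
  also have "\<dots> = f (x', y')" using sym y' by metis
  finally show ?thesis .
qed

lemma cell_sym: "order2_cell Q n p i j = order2_cell Q n p j i"
  unfolding order2_cell_def by (auto simp: insert_commute)

theorem lemma2:
  fixes Q :: "(real^2) set"
    and \<phi> :: "real^2 \<Rightarrow> real"
    and p :: "nat \<Rightarrow> real^2"
    and n :: nat
    and f :: "real \<times> real \<Rightarrow> real"
  assumes "compact Q" and "convex Q"
    and "set_integrable lborel Q \<phi>"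
    and "\<And>q. q \<in> Q \<Longrightarrow> \<phi> q \<ge> 0"
    and "n \<ge> 2"
    and "\<And>i. i \<in> {1..n} \<Longrightarrow> p i \<in> Q"
    and "inj_on p {1..n}"
    and "f differentiable_on {x. fst x \<ge> 0 \<and> snd x \<ge> 0}"
    and "\<And>a b D. a \<ge> 0 \<Longrightarrow> b \<ge> 0 \<Longrightarrow>
           ((\<lambda>t. f (t, b)) has_real_derivative D) (at a within {0..}) \<Longrightarrow> D \<ge> 0"
    and "\<And>a b D. a \<ge> 0 \<Longrightarrow> b \<ge> 0 \<Longrightarrow>
           ((\<lambda>t. f (a, t)) has_real_derivative D) (at b within {0..}) \<Longrightarrow> D \<ge> 0"
    and "\<And>a b. a \<ge> 0 \<Longrightarrow> b \<ge> 0 \<Longrightarrow> f (a, b) = f (b, a)"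
  shows "(LINT q:Q|lborel.
            Min ((\<lambda>(i, j). f (dist q (p i), dist q (p j))) ` pairs n) * \<phi> q)
       = (\<Sum>(i, j)\<in>pairs n.
            LINT q:order2_cell Q n p i j|lborel. f (dist q (p i), dist q (p j)) * \<phi> q)"
proof -
  note dif = assms(8) and der = assms(10) and sym = assms(11)
  define G where "G k q = f (dist q (p (fst k)), dist q (p (snd k)))" for k :: "nat \<times> nat" and q
  define C where "C k = order2_cell Q n p (fst k) (snd k)" for k
  define M where "M q = Min ((\<lambda>k. G k q) ` pairs n)" for q
  define \<psi> where "\<psi> q = indicator Q q * \<phi> q" for q
  define N where "N = (\<Union>m\<in>{1..n}. \<Union>k\<in>{1..n}-{m}. {q. dist q (p m) = dist q (p k)})"
  have fin: "finite (pairs n)"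
    by (rule finite_subset[of _ "{1..n}\<times>{1..n}"]) (auto simp: pairs_def)
  have psi_int: "integrable lborel \<psi>"
    using assms(3) unfolding set_integrable_def \<psi>_def by simp
  have psi_nn: "\<psi> q \<ge> 0" for q
    using assms(4) by (auto simp: \<psi>_def indicator_def)
  have fcont: "continuous_on {x. fst x \<ge> 0 \<and> snd x \<ge> 0} f"
    using dif by (rule differentiable_imp_continuous_on)
  have Gcont: "continuous_on UNIV (G k)" for k
    unfolding G_def
    by (rule continuous_on_compose2[OF fcont]) (auto intro!: continuous_intros)
  have Gmeas: "G k \<in> borel_measurable lborel" for k
    using borel_measurable_continuous_onI[OF Gcont] by simp
  have closedQ: "closed Q" using assms(1) by (rule compact_imp_closed)
  have Csub: "C k \<subseteq> Q" for k by (auto simp: C_def order2_cell_def)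
  have Cclosed: "closed (C k)" for k
  proof -
    have "C k = Q \<inter> (\<Inter>m\<in>{1..n} - {fst k, snd k}. {q. dist q (p (fst k)) \<le> dist q (p m)} \<inter> {q. dist q (p (snd k)) \<le> dist q (p m)})"
      by (auto simp: C_def order2_cell_def)
    also have "closed \<dots>"
      by (intro closed_Int closedQ closed_INT ballI closed_Collect_le continuous_intros)
    finally show ?thesis .
  qed
  have Cmeas: "C k \<in> sets lborel" for k using Cclosed by (simp add: borel_closed)
  have Gnn: "dist q (p i) \<ge> 0" for q i by simp
  have min_cell: "M q = G k q" if k: "k \<in> pairs n" and q: "q \<in> C k" for k q
    unfolding M_def
  proof (rule Min_eqI)
    show "finite ((\<lambda>k. G k q) ` pairs n)" using fin by simp
    show "G k q \<in> (\<lambda>k. G k q) ` pairs n" using k by simp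
    fix y assume "y \<in> (\<lambda>k. G k q) ` pairs n"
    then obtain l where l: "l \<in> pairs n" and y: "y = G l q" by auto
    obtain i j where kij: "k = (i,j)" by (cases k)
    obtain a b where lab: "l = (a,b)" by (cases l)
    let ?d = "\<lambda>m. dist q (p m)"
    have ij: "i \<in> {1..n}" "j \<in> {1..n}" "i < j" using k kij by (auto simp: pairs_def)
    have ab: "a \<in> {1..n}" "b \<in> {1..n}" "a < b" using l lab by (auto simp: pairs_def)
    have cell: "\<And>m. m \<in> {1..n} \<Longrightarrow> m \<noteq> i \<Longrightarrow> m \<noteq> j \<Longrightarrow> ?d i \<le> ?d m \<and> ?d j \<le> ?d m"
      using q kij by (auto simp: C_def order2_cell_def)
    have M: "0 \<le> x \<Longrightarrow> x \<le> x' \<Longrightarrow> 0 \<le> y \<Longrightarrow> y \<le> y' \<Longrightarrow> f (x, y) \<le> f (x', y')" for x x' y y'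
      by (rule mono_both[OF dif der sym])
    have S: "f (?d u, ?d v) = f (?d v, ?d u)" for u v by (rule sym) auto
    have "f (?d i, ?d j) \<le> f (?d a, ?d b)"
    proof -
      consider "a = i" "b = j" | "a = i" "b \<noteq> j" | "a = j" | "b = i" | "b = j" "a \<noteq> i"
        | "a \<noteq> i" "a \<noteq> j" "b \<noteq> i" "b \<noteq> j" by blast
      thus ?thesis
      proof cases
        case 1 thus ?thesis by simp
      next
        case 2 thus ?thesis using cell[of b] ab ij by (intro M) auto
      next
        case 3 thus ?thesis using cell[of b] ab ij S[of i j] by (auto intro!: M)
      next
        case 4 thus ?thesis using cell[of a] ab ij S[of i j] by (auto intro!: M)
      next
        case 5 thus ?thesis using cell[of a] ab ij by (intro M) auto
      next
        case 6 thus ?thesis using cell[of a] cell[of b] ab ij by (intro M) auto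
      qed
    qed
    thus "G k q \<le> y" using y kij lab by (simp add: G_def)
  qed
  have Nnull: "N \<in> null_sets lborel"
    unfolding N_def
  proof (rule null_sets.finite_UN)
    show "finite {1..n}" by simp
    fix m assume m: "m \<in> {1..n}"
    show "(\<Union>k\<in>{1..n}-{m}. {q. dist q (p m) = dist q (p k)}) \<in> null_sets lborel"
    proof (rule null_sets.finite_UN)
      show "finite ({1..n}-{m})" by simp
      fix k assume "k \<in> {1..n}-{m}"
      hence "p m \<noteq> p k" using m assms(7) by (auto dest: inj_onD)
      thus "{q. dist q (p m) = dist q (p k)} \<in> null_sets lborel" by (rule bisector_null)
    qed
  qed
  have exists: "\<exists>k\<in>pairs n. q \<in> C k" if q: "q \<in> Q" for q
  proof -
    let ?d = "\<lambda>m. dist q (p m)"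
    have ne1: "{1..n} \<noteq> {}" using assms(5) by auto
    have "Min (?d ` {1..n}) \<in> ?d ` {1..n}" by (rule Min_in) (use ne1 in auto)
    then obtain i where i0: "Min (?d ` {1..n}) = ?d i" "i \<in> {1..n}" by (rule imageE)
    have i: "i \<in> {1..n}" "?d i = Min (?d ` {1..n})" using i0 by simp_all
    have ne2: "{1..n} - {i} \<noteq> {}"
    proof
      assume "{1..n} - {i} = {}"
      hence "{1..n} \<subseteq> {i}" by auto
      hence "card {1..n} \<le> card {i}" by (intro card_mono) auto
      thus False using assms(5) by simp
    qed
    have "Min (?d ` ({1..n} - {i})) \<in> ?d ` ({1..n} - {i})" by (rule Min_in) (use ne2 in auto)
    then obtain j where j0: "Min (?d ` ({1..n} - {i})) = ?d j" "j \<in> {1..n} - {i}" by (rule imageE)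
    have j: "j \<in> {1..n} - {i}" "?d j = Min (?d ` ({1..n} - {i}))" using j0 by simp_all
    have "q \<in> order2_cell Q n p i j"
      unfolding order2_cell_def
    proof (intro CollectI conjI q ballI)
      fix m assume m: "m \<in> {1..n} - {i, j}"
      show "?d i \<le> ?d m" unfolding i(2) by (rule Min_le) (use m in auto)
      show "?d j \<le> ?d m" unfolding j(2) by (rule Min_le) (use m in auto)
    qed
    moreover have "(min i j, max i j) \<in> pairs n"
    proof (cases "i < j")
      case True thus ?thesis using i(1) j(1) by (simp add: pairs_def)
    next
      case False hence "j < i" using j(1) by auto
      thus ?thesis using i(1) j(1) by (simp add: pairs_def)
    qed
    moreover have "order2_cell Q n p i j = C (min i j, max i j)"
      unfolding C_def by (cases "i \<le> j") (auto simp: min_def max_def cell_sym)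
    ultimately show ?thesis by metis
  qed
  have unique: "k = l" if "k \<in> pairs n" "l \<in> pairs n" "q \<in> C k" "q \<in> C l" "q \<notin> N" for k l q
  proof (rule ccontr)
    assume ne: "k \<noteq> l"
    obtain i j where kij: "k = (i,j)" by (cases k)
    obtain a b where lab: "l = (a,b)" by (cases l)
    let ?d = "\<lambda>m. dist q (p m)"
    have ij: "i \<in> {1..n}" "j \<in> {1..n}" "i < j" using that kij by (auto simp: pairs_def)
    have ab: "a \<in> {1..n}" "b \<in> {1..n}" "a < b" using that lab by (auto simp: pairs_def)
    have c1: "\<And>m. m \<in> {1..n} \<Longrightarrow> m \<noteq> i \<Longrightarrow> m \<noteq> j \<Longrightarrow> ?d i \<le> ?d m \<and> ?d j \<le> ?d m"
      using that kij by (auto simp: C_def order2_cell_def)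
    have c2: "\<And>m. m \<in> {1..n} \<Longrightarrow> m \<noteq> a \<Longrightarrow> m \<noteq> b \<Longrightarrow> ?d a \<le> ?d m \<and> ?d b \<le> ?d m"
      using that lab by (auto simp: C_def order2_cell_def)
    have e1: "a \<notin> {i,j} \<or> b \<notin> {i,j}"
    proof (rule ccontr)
      assume "\<not> ?thesis"
      hence "a \<in> {i,j}" "b \<in> {i,j}" by auto
      hence "a = i" "b = j" using ij(3) ab(3) by auto
      thus False using ne kij lab by simp
    qed
    then obtain m where m: "m \<in> {a,b}" "m \<notin> {i,j}" by blast
    have e2: "i \<notin> {a,b} \<or> j \<notin> {a,b}"
    proof (rule ccontr)
      assume "\<not> ?thesis"
      hence "i \<in> {a,b}" "j \<in> {a,b}" by auto
      hence "a = i" "b = j" using ij(3) ab(3) by auto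
      thus False using ne kij lab by simp
    qed
    then obtain m' where m': "m' \<in> {i,j}" "m' \<notin> {a,b}" by blast
    have "?d m' \<le> ?d m" using c1[of m] m m' ab by auto
    moreover have "?d m \<le> ?d m'" using c2[of m'] m m' ij by auto
    ultimately have "?d m = ?d m'" by simp
    moreover have "m \<noteq> m'" using m m' by auto
    moreover have "m \<in> {1..n}" "m' \<in> {1..n}" using m m' ij ab by auto
    ultimately have "q \<in> N" unfolding N_def by blast
    thus False using that by simp
  qed
  have AE: "AE q in lborel. M q * \<psi> q = (\<Sum>k\<in>pairs n. indicator (C k) q * G k q * \<psi> q)"
  proof (rule AE_I'[OF Nnull], rule subsetI, simp, rule ccontr)
    fix q assume bad: "M q * \<psi> q \<noteq> (\<Sum>k\<in>pairs n. indicator (C k) q * G k q * \<psi> q)"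
      and qN: "q \<notin> N"
    show False
    proof (cases "q \<in> Q")
      case False
      hence "\<psi> q = 0" by (simp add: \<psi>_def)
      thus False using bad by simp
    next
      case True
      obtain k where k: "k \<in> pairs n" "q \<in> C k" using exists[OF True] by blast
      have "(\<Sum>l\<in>pairs n. indicator (C l) q * G l q * \<psi> q)
          = indicator (C k) q * G k q * \<psi> q + (\<Sum>l\<in>pairs n - {k}. indicator (C l) q * G l q * \<psi> q)"
        by (rule sum.remove[OF fin k(1)])
      also have "(\<Sum>l\<in>pairs n - {k}. indicator (C l) q * G l q * \<psi> q) = 0"
      proof (rule sum.neutral, rule ballI)
        fix l assume l: "l \<in> pairs n - {k}"
        have "q \<notin> C l"
        proof
          assume "q \<in> C l"
          hence "k = l" using unique[OF k(1) _ k(2) _ qN] l by blast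
          thus False using l by simp
        qed
        thus "indicator (C l) q * G l q * \<psi> q = 0" by simp
      qed
      also have "indicator (C k) q * G k q * \<psi> q + 0 = M q * \<psi> q"
        using k min_cell[OF k] by simp
      finally show False using bad by simp
    qed
  qed
  have Mmeas: "M \<in> borel_measurable lborel"
    unfolding M_def by (rule borel_measurable_Min[OF fin Gmeas])
  have psimeas: "\<psi> \<in> borel_measurable lborel" by (rule borel_measurable_integrable[OF psi_int])
  have intk: "integrable lborel (\<lambda>q. indicator (C k) q * G k q * \<psi> q)" for k
  proof -
    have "compact (G k ` Q)"
      by (rule compact_continuous_image[OF continuous_on_subset[OF Gcont] assms(1)]) simp
    hence "bounded (G k ` Q)" by (rule compact_imp_bounded)
    then obtain B where B: "\<And>x. x \<in> G k ` Q \<Longrightarrow> norm x \<le> B" unfolding bounded_iff by blast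
    show ?thesis
    proof (rule Bochner_Integration.integrable_bound[of lborel "\<lambda>q. B * \<psi> q"])
      show "integrable lborel (\<lambda>q. B * \<psi> q)" by (rule integrable_mult_right[OF psi_int])
      show "(\<lambda>q. indicator (C k) q * G k q * \<psi> q) \<in> borel_measurable lborel"
        by (intro borel_measurable_times borel_measurable_indicator Cmeas Gmeas psimeas)
      show "AE q in lborel. norm (indicator (C k) q * G k q * \<psi> q) \<le> norm (B * \<psi> q)"
      proof (rule AE_I2)
        fix q
        show "norm (indicator (C k) q * G k q * \<psi> q) \<le> norm (B * \<psi> q)"
        proof (cases "q \<in> Q")
          case True
          have GB: "\<bar>G k q\<bar> \<le> B" using B[of "G k q"] True by simp
          have i01: "0 \<le> (indicator (C k) q :: real)" "(indicator (C k) q :: real) \<le> 1" by (auto simp: indicator_def)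
          have "norm (indicator (C k) q * G k q * \<psi> q) = indicator (C k) q * \<bar>G k q\<bar> * \<psi> q"
            using psi_nn[of q] i01 by (simp add: abs_mult)
          also have "\<dots> \<le> 1 * B * \<psi> q"
            by (intro mult_right_mono mult_mono i01 GB psi_nn) auto
          also have "\<dots> = norm (B * \<psi> q)" using psi_nn[of q] GB by (simp add: abs_mult)
          finally show ?thesis .
        next
          case False thus ?thesis by (simp add: \<psi>_def)
        qed
      qed
    qed
  qed
  have L: "(LINT q:Q|lborel. Min ((\<lambda>(i, j). f (dist q (p i), dist q (p j))) ` pairs n) * \<phi> q)
      = integral\<^sup>L lborel (\<lambda>q. M q * \<psi> q)"
    unfolding set_lebesgue_integral_def
    by (rule Bochner_Integration.integral_cong[OF refl]) (simp add: M_def G_def \<psi>_def case_prod_unfold)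
  have R: "(LINT q:order2_cell Q n p (fst k) (snd k)|lborel. f (dist q (p (fst k)), dist q (p (snd k))) * \<phi> q)
      = integral\<^sup>L lborel (\<lambda>q. indicator (C k) q * G k q * \<psi> q)" for k
    unfolding set_lebesgue_integral_def
  proof (rule Bochner_Integration.integral_cong[OF refl])
    fix q
    show "indicator (order2_cell Q n p (fst k) (snd k)) q *\<^sub>R (f (dist q (p (fst k)), dist q (p (snd k))) * \<phi> q)
        = indicator (C k) q * G k q * \<psi> q"
      using Csub[of k] by (cases "q \<in> C k") (auto simp: C_def G_def \<psi>_def)
  qed
  have "integral\<^sup>L lborel (\<lambda>q. M q * \<psi> q)
      = integral\<^sup>L lborel (\<lambda>q. \<Sum>k\<in>pairs n. indicator (C k) q * G k q * \<psi> q)"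
  proof (rule integral_cong_AE)
    show "(\<lambda>q. M q * \<psi> q) \<in> borel_measurable lborel"
      by (intro borel_measurable_times Mmeas psimeas)
    show "(\<lambda>q. \<Sum>k\<in>pairs n. indicator (C k) q * G k q * \<psi> q) \<in> borel_measurable lborel"
      by (rule borel_measurable_integrable[OF Bochner_Integration.integrable_sum[OF intk]])
  qed (rule AE)
  also have "\<dots> = (\<Sum>k\<in>pairs n. integral\<^sup>L lborel (\<lambda>q. indicator (C k) q * G k q * \<psi> q))"
    by (rule Bochner_Integration.integral_sum[OF intk])
  also have "\<dots> = (\<Sum>(i, j)\<in>pairs n.
            LINT q:order2_cell Q n p i j|lborel. f (dist q (p i), dist q (p j)) * \<phi> q)"
    by (simp only: R[symmetric] case_prod_unfold)
  finally show ?thesis using L by simp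
qed

end
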